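(* Let $\mathcal{X}\subset\mathbb{R}^D$ be compact, let $\mathcal{Y}$ be a mark space and $\Theta$ a parameter space. Consider a Neyman-Scott process with gamma weights: latent events $\{(m_l,w_l,\theta_l)\}_{l=1}^L$ are drawn from a Poisson process on $\mathcal{X}\times\mathbb{R}_+\times\Theta$ with intensity $\nu(m,w,\theta)=\overline{L}(\mathcal{X})\,\mathrm{Ga}(w\mid\alpha,\beta)\,p(m,\theta)$, where $\overline{L}(\mathcal{X})>0$, $\alpha,\beta>0$ and $p(m,\theta)$ is a probability density (so $L\sim\mathrm{Po}(\overline{L}(\mathcal{X}))$); given the latent events, observed points $\{(x_n,y_n)\}_{n=1}^N$ are drawn from a Poisson process on $\mathcal{X}\times\mathcal{Y}$ with intensity $\sum_{l=1}^L w_l\,p(x,y\mid m_l,\theta_l)$, each $p(\cdot,\cdot\mid m,\theta)$ being a probability density. Label the observed points $1,\dots,N$ in uniformly random order and let $\mathcal{C}$ be the partition of $[N]=\{1,\dots,N\}$ into nonempty blocks grouping points with the same parent latent event. Then, integrating over the latent event locations, weights and parameters, the joint probability of the (random) number of points $N$ and the partition $\mathcal{C}$ is $$p(N,\mathcal{C})=V_{N,|\mathcal{C}|}\prod_{\mathcal{C}_k\in\mathcal{C}}\frac{\Gamma(|\mathcal{C}_k|+\alpha)}{\Gamma(\alpha)},$$ where $|\mathcal{C}|$ is the number of blocks, $|\mathcal{C}_k|$ the size of block $\mathcal{C}_k$, $N=\sum_k|\mathcal{C}_k|$, and $$V_{N,|\mathcal{C}|}=\frac{1}{N!}\left(\frac{1}{1+\beta}\right)^N\sum_{L=|\mathcal{C}|}^\infty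 \mathrm{Po}(L\mid\overline{L}(\mathcal{X}))\,\frac{L!}{(L-|\mathcal{C}|)!}\left(\frac{\beta}{1+\beta}\right)^{L\alpha}.$$
   Context: $\mathrm{Ga}(w\mid\alpha,\beta)$ is the gamma density with shape $\alpha$ and rate $\beta$; $\mathrm{Po}(L\mid\mu)$ is the Poisson pmf with mean $\mu$. The parent of an observed point is the latent event whose impulse response generated it (by Poisson superposition, the observed process is the union of independent Poisson processes with intensities $w_l\,p(x,y\mid m_l,\theta_l)$). *)

theory Defs
  imports "HOL-Analysis.Analysis" "HOL-Probability.Probability" "HOL-Library.Disjoint_Sets"
begin

definition gamma_dens :: "real \<Rightarrow> real \<Rightarrow> real \<Rightarrow> real" where
  "gamma_dens a b w = (if 0 < w then b powr a * w powr (a - 1) * exp (- b * w) / Gamma a else 0)"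

definition Po :: "nat \<Rightarrow> real \<Rightarrow> real" where
  "Po k mu = exp (- mu) * mu ^ k / fact k"

definition po_pmf :: "real \<Rightarrow> nat pmf" where
  "po_pmf mu = (if 0 < mu then poisson_pmf mu else return_pmf 0)"

definition parent_list :: "nat \<Rightarrow> (nat \<Rightarrow> nat) \<Rightarrow> nat list" where
  "parent_list L n = concat (map (\<lambda>l. replicate (n l) l) [0..<L])"

definition parent_partition :: "nat \<Rightarrow> nat \<Rightarrow> (nat \<Rightarrow> nat) \<Rightarrow> nat set set" where
  "parent_partition L N par = {{i \<in> {1..N}. par i = l} | l. l < L} - {{}}"

text \<open>Given L latent events with weights w l and children-intensity masses I l
  (the integral of the child density over the observation window), the observed
  points form the superposition of independent Poisson processes; latent event l
  has Po(w l * I l) children. The observed points are then labelled 1..N in a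
  uniformly random order (sigma is a uniform random permutation of {0..<N}; label
  i+1 is given to the (sigma i)-th point of the parent list).\<close>
definition NC_given_latent :: "nat \<Rightarrow> (nat \<Rightarrow> real) \<Rightarrow> (nat \<Rightarrow> real) \<Rightarrow> (nat \<times> nat set set) pmf" where
  "NC_given_latent L w I =
     do { n \<leftarrow> Pi_pmf {..<L} 0 (\<lambda>l. po_pmf (w l * I l));
          let ps = parent_list L n;
          let N = length ps;
          \<sigma> \<leftarrow> pmf_of_set {\<sigma>. \<sigma> permutes {..<N}};
          return_pmf (N, parent_partition L N (\<lambda>i. ps ! \<sigma> (i - 1))) }"

text \<open>Distribution of a single latent event (m, w, theta): the normalised latent
  intensity nu / Lbar = Ga(w | alpha, beta) p(m, theta) on X x R+ x Theta.\<close>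
definition latent_measure ::
  "'a::euclidean_space set \<Rightarrow> 't measure \<Rightarrow> real \<Rightarrow> real \<Rightarrow> ('a \<Rightarrow> 't \<Rightarrow> real) \<Rightarrow> ('a \<times> real \<times> 't) measure" where
  "latent_measure X M\<Theta> \<alpha> \<beta> pmt =
     density (restrict_space lborel X \<Otimes>\<^sub>M (lborel \<Otimes>\<^sub>M M\<Theta>))
       (\<lambda>(m, w, \<theta>). ennreal (gamma_dens \<alpha> \<beta> w * pmt m \<theta>))"

text \<open>Joint probability p(N, C) for the Neyman-Scott process: L ~ Po(Lbar), latent
  events i.i.d. from latent_measure (this is the Poisson process with intensity nu),
  and the children mass of latent (m, theta) is the integral of p(x, y | m, theta)
  over X x Y.\<close>
definition NS_prob ::
  "'a::euclidean_space set \<Rightarrow> 'y measure \<Rightarrow> 't measure \<Rightarrow> real \<Rightarrow> real \<Rightarrow> real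
   \<Rightarrow> ('a \<Rightarrow> 't \<Rightarrow> real) \<Rightarrow> ('a \<times> 'y \<Rightarrow> 'a \<Rightarrow> 't \<Rightarrow> real) \<Rightarrow> nat \<Rightarrow> nat set set \<Rightarrow> real" where
  "NS_prob X MY M\<Theta> Lbar \<alpha> \<beta> pmt pxy N C =
     (\<Sum>L. Po L Lbar *
        (\<integral>z. pmf (NC_given_latent L (\<lambda>l. fst (snd (z l)))
                     (\<lambda>l. enn2real (\<integral>\<^sup>+ xy. ennreal (pxy xy (fst (z l)) (snd (snd (z l))))
                                         \<partial>(restrict_space lborel X \<Otimes>\<^sub>M MY))))
                  (N, C)
           \<partial>(PiM {..<L} (\<lambda>_. latent_measure X M\<Theta> \<alpha> \<beta> pmt))))"

end

theory Submission
  imports Defs "HOL-Combinatorics.Multiset_Permutations"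
begin

lemma count_parent_list:
  "count (mset (parent_list L n)) x = (if x < L then n x else 0)"
  by (induction L) (auto simp: parent_list_def)

lemma length_parent_list: "length (parent_list L n) = (\<Sum>l<L. n l)"
  by (induction L) (auto simp: parent_list_def)

lemma set_parent_list: "set (parent_list L n) \<subseteq> {..<L}"
  unfolding parent_list_def by auto

lemma perm_uniform:
  "map_pmf (\<lambda>\<sigma>. permute_list \<sigma> xs) (pmf_of_set {\<sigma>. \<sigma> permutes {..<length xs}})
     = pmf_of_set (permutations_of_multiset (mset xs))"
proof -
  define P where "P = {\<sigma>. \<sigma> permutes {..<length xs}}"
  define PM where "PM = permutations_of_multiset (mset xs)"
  define F where "F ys = {\<sigma>\<in>P. permute_list \<sigma> xs = ys}" for ys
  have finP: "finite P" unfolding P_def by (simp add: finite_permutations)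
  have P0: "P \<noteq> {}" unfolding P_def using permutes_id by blast
  have cardP: "card P = fact (length xs)" unfolding P_def by (rule card_permutations) auto
  have finPM: "finite PM" "PM \<noteq> {}" unfolding PM_def
    using finite_permutations_of_multiset by (auto simp: permutations_of_multiset_def)
  have fib: "card (F ys) = card (F xs)" if "ys \<in> PM" for ys
  proof -
    from that have "mset ys = mset xs" by (simp add: PM_def permutations_of_multiset_def)
    then obtain p where p: "p permutes {..<length xs}" "permute_list p xs = ys"
      using mset_eq_permutation[of ys xs] by metis
    have pi: "inv p permutes {..<length xs}" using p(1) by (rule permutes_inv)
    have "bij_betw (\<lambda>\<tau>. \<tau> \<circ> p) (F xs) (F ys)"
    proof (rule bij_betw_byWitness[where f'="\<lambda>\<tau>. \<tau> \<circ> inv p"])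
      show "\<forall>a\<in>F xs. a \<circ> p \<circ> inv p = a" using p(1)
        by (auto simp: fun_eq_iff permutes_inverses(1))
      show "\<forall>a'\<in>F ys. a' \<circ> inv p \<circ> p = a'" using p(1)
        by (auto simp: fun_eq_iff permutes_inverses(2))
      show "(\<lambda>\<tau>. \<tau> \<circ> p) ` F xs \<subseteq> F ys"
        using p by (auto simp: F_def P_def permute_list_compose permutes_compose)
      show "(\<lambda>\<tau>. \<tau> \<circ> inv p) ` F ys \<subseteq> F xs"
      proof
        fix s assume "s \<in> (\<lambda>\<tau>. \<tau> \<circ> inv p) ` F ys"
        then obtain \<tau> where t: "\<tau> \<in> F ys" "s = \<tau> \<circ> inv p" by blast
        have pt: "permute_list \<tau> xs = permute_list p xs" using t p by (simp add: F_def)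
        have "permute_list (\<tau> \<circ> inv p) xs = permute_list (inv p) (permute_list \<tau> xs)"
          using pi by (rule permute_list_compose)
        also have "\<dots> = permute_list (inv p) (permute_list p xs)" using pt by simp
        also have "\<dots> = permute_list (p \<circ> inv p) xs" using pi by (rule permute_list_compose[symmetric])
        also have "p \<circ> inv p = id" using p(1) permutes_inv_o(1) by blast
        finally have "permute_list (\<tau> \<circ> inv p) xs = xs" by (metis permute_list_id)
        then show "s \<in> F xs" using t pi by (auto simp: F_def P_def permutes_compose)
      qed
    qed
    thus ?thesis by (rule bij_betw_same_card[symmetric])
  qed
  have Pun: "P = (\<Union>ys\<in>PM. F ys)"
    by (auto simp: F_def PM_def P_def permutations_of_multiset_def)
  have "card P = (\<Sum>ys\<in>PM. card (F ys))"
    unfolding Pun using finPM finP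
    by (subst card_UN_disjoint) (auto simp: F_def)
  also have "\<dots> = card PM * card (F xs)" using fib by simp
  finally have cP: "card P = card PM * card (F xs)" .
  show ?thesis
  proof (rule pmf_eqI)
    fix ys
    have "pmf (map_pmf (\<lambda>\<sigma>. permute_list \<sigma> xs) (pmf_of_set P)) ys = card (P \<inter> ((\<lambda>\<sigma>. permute_list \<sigma> xs) -` {ys})) / card P"
      using finP P0 by (simp add: pmf_map measure_pmf_of_set)
    also have "P \<inter> ((\<lambda>\<sigma>. permute_list \<sigma> xs) -` {ys}) = F ys" by (auto simp: F_def)
    finally have e: "pmf (map_pmf (\<lambda>\<sigma>. permute_list \<sigma> xs) (pmf_of_set P)) ys = card (F ys) / card P" .
    show "pmf (map_pmf (\<lambda>\<sigma>. permute_list \<sigma> xs) (pmf_of_set {\<sigma>. \<sigma> permutes {..<length xs}})) ys =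
         pmf (pmf_of_set (permutations_of_multiset (mset xs))) ys"
    proof (cases "ys \<in> PM")
      case True
      have "card P > 0" using finP P0 by (simp add: card_gt_0_iff)
      hence "card (F xs) > 0" using cP by simp
      then show ?thesis using e True fib finPM cP unfolding P_def[symmetric] PM_def[symmetric]
        by (simp add: indicator_def)
    next
      case False
      hence "F ys = {}" by (auto simp: F_def PM_def P_def permutations_of_multiset_def)
      then show ?thesis using e False finPM unfolding P_def[symmetric] PM_def[symmetric]
        by (simp add: indicator_def)
    qed
  qed
qed

definition part_list :: "nat \<Rightarrow> nat list \<Rightarrow> nat set set" where
  "part_list L ys = parent_partition L (length ys) (\<lambda>i. ys ! (i - 1))"

definition cntf :: "nat \<Rightarrow> nat list \<Rightarrow> nat \<Rightarrow> nat" where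
  "cntf L ys = (\<lambda>l. if l < L then count (mset ys) l else 0)"

definition DL :: "nat \<Rightarrow> (nat \<Rightarrow> nat pmf) \<Rightarrow> nat list pmf" where
  "DL L Q = bind_pmf (Pi_pmf {..<L} 0 Q)
      (\<lambda>n. pmf_of_set (permutations_of_multiset (mset (parent_list L n))))"

definition XC :: "nat \<Rightarrow> nat \<Rightarrow> nat set set \<Rightarrow> nat list set" where
  "XC L N C = {ys. length ys = N \<and> set ys \<subseteq> {..<L} \<and> part_list L ys = C}"

lemma NC_eq_DL:
  "NC_given_latent L w I = map_pmf (\<lambda>ys. (length ys, part_list L ys)) (DL L (\<lambda>l. po_pmf (w l * I l)))"
proof -
  have inner: "bind_pmf (pmf_of_set {\<sigma>. \<sigma> permutes {..<length ps}})
       (\<lambda>\<sigma>. return_pmf (length ps, parent_partition L (length ps) (\<lambda>i. ps ! \<sigma> (i - 1))))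
     = map_pmf (\<lambda>ys. (length ys, part_list L ys)) (pmf_of_set (permutations_of_multiset (mset ps)))"
    for ps :: "nat list"
  proof -
    have fin: "finite {\<sigma>. \<sigma> permutes {..<length ps}}" by (simp add: finite_permutations)
    have ne: "{\<sigma>. \<sigma> permutes {..<length ps}} \<noteq> {}" using permutes_id by blast
    have "bind_pmf (pmf_of_set {\<sigma>. \<sigma> permutes {..<length ps}})
       (\<lambda>\<sigma>. return_pmf (length ps, parent_partition L (length ps) (\<lambda>i. ps ! \<sigma> (i - 1))))
      = map_pmf (\<lambda>\<sigma>. (length ps, parent_partition L (length ps) (\<lambda>i. ps ! \<sigma> (i - 1))))
          (pmf_of_set {\<sigma>. \<sigma> permutes {..<length ps}})"
      by (simp add: map_pmf_def)
    also have "\<dots> = map_pmf ((\<lambda>ys. (length ys, part_list L ys)) \<circ> (\<lambda>\<sigma>. permute_list \<sigma> ps))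
          (pmf_of_set {\<sigma>. \<sigma> permutes {..<length ps}})"
    proof (rule map_pmf_cong[OF refl])
      fix \<sigma> assume "\<sigma> \<in> set_pmf (pmf_of_set {\<sigma>. \<sigma> permutes {..<length ps}})"
      hence s: "\<sigma> permutes {..<length ps}" using fin ne by simp
      have "parent_partition L (length ps) (\<lambda>i. ps ! \<sigma> (i - 1)) =
            parent_partition L (length ps) (\<lambda>i. permute_list \<sigma> ps ! (i - 1))"
        unfolding parent_partition_def
        using permute_list_nth[OF s] by (intro arg_cong2[where f="(-)"] refl Collect_cong arg_cong[where f=Collect] ext) auto
      then show "(length ps, parent_partition L (length ps) (\<lambda>i. ps ! \<sigma> (i - 1))) =
          ((\<lambda>ys. (length ys, part_list L ys)) \<circ> (\<lambda>\<sigma>. permute_list \<sigma> ps)) \<sigma>"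
        by (simp add: part_list_def)
    qed
    also have "\<dots> = map_pmf (\<lambda>ys. (length ys, part_list L ys)) (pmf_of_set (permutations_of_multiset (mset ps)))"
      by (simp add: pmf.map_comp[symmetric] perm_uniform)
    finally show ?thesis .
  qed
  show ?thesis
    unfolding NC_given_latent_def DL_def Let_def inner map_bind_pmf ..
qed

lemma mset_parent_list_eq_iff:
  assumes "\<forall>l. l \<notin> {..<L} \<longrightarrow> n l = 0"
  shows "mset ys = mset (parent_list L n) \<longleftrightarrow> set ys \<subseteq> {..<L} \<and> n = cntf L ys"
proof
  assume h: "mset ys = mset (parent_list L n)"
  hence "set ys = set (parent_list L n)" by (metis set_mset_mset)
  hence s: "set ys \<subseteq> {..<L}" using set_parent_list by blast
  have "n = cntf L ys"
  proof
    fix l show "n l = cntf L ys l"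
      using assms h count_parent_list[of L n l] by (auto simp: cntf_def)
  qed
  with s show "set ys \<subseteq> {..<L} \<and> n = cntf L ys" by blast
next
  assume h: "set ys \<subseteq> {..<L} \<and> n = cntf L ys"
  show "mset ys = mset (parent_list L n)"
  proof (rule multiset_eqI)
    fix x
    show "count (mset ys) x = count (mset (parent_list L n)) x"
    proof (cases "x < L")
      case True thus ?thesis using h by (simp add: count_parent_list cntf_def)
    next
      case False
      hence "x \<notin> set ys" using h by auto
      hence "count (mset ys) x = 0" by (simp add: count_mset_0_iff)
      thus ?thesis using False by (simp add: count_parent_list)
    qed
  qed
qed

lemma pmf_DL:
  "pmf (DL L Q) ys = (if set ys \<subseteq> {..<L}
      then pmf (Pi_pmf {..<L} 0 Q) (cntf L ys) / card (permutations_of_multiset (mset ys)) else 0)"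
proof -
  have ne: "permutations_of_multiset (mset (parent_list L n)) \<noteq> {}" for n
    by (auto simp: permutations_of_multiset_def)
  have mem: "ys \<in> permutations_of_multiset (mset (parent_list L n)) \<longleftrightarrow> mset ys = mset (parent_list L n)" for n
    by (simp add: permutations_of_multiset_def)
  have "pmf (DL L Q) ys = (\<integral>n. pmf (pmf_of_set (permutations_of_multiset (mset (parent_list L n)))) ys
            \<partial>measure_pmf (Pi_pmf {..<L} 0 Q))"
    unfolding DL_def by (rule pmf_bind)
  also have "\<dots> = (\<Sum>n\<in>(if set ys \<subseteq> {..<L} then {cntf L ys} else {}).
        pmf (pmf_of_set (permutations_of_multiset (mset (parent_list L n)))) ys * pmf (Pi_pmf {..<L} 0 Q) n)"
  proof (rule integral_measure_pmf_real)
    fix n assume n: "n \<in> set_pmf (Pi_pmf {..<L} 0 Q)"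
      and nz: "pmf (pmf_of_set (permutations_of_multiset (mset (parent_list L n)))) ys \<noteq> 0"
    from n have n0: "\<forall>l. l \<notin> {..<L} \<longrightarrow> n l = 0" using set_Pi_pmf_subset[of "{..<L}" 0 Q] by auto
    from nz have "ys \<in> permutations_of_multiset (mset (parent_list L n))"
      using ne by (auto simp: indicator_def split: if_splits)
    hence "set ys \<subseteq> {..<L} \<and> n = cntf L ys" using mset_parent_list_eq_iff[OF n0] mem by blast
    then show "n \<in> (if set ys \<subseteq> {..<L} then {cntf L ys} else {})" by simp
  qed simp
  also have "\<dots> = (if set ys \<subseteq> {..<L}
      then pmf (Pi_pmf {..<L} 0 Q) (cntf L ys) / card (permutations_of_multiset (mset ys)) else 0)"
  proof (cases "set ys \<subseteq> {..<L}")
    case True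
    have c0: "\<forall>l. l \<notin> {..<L} \<longrightarrow> cntf L ys l = 0" by (simp add: cntf_def)
    have "mset ys = mset (parent_list L (cntf L ys))"
      using mset_parent_list_eq_iff[OF c0] True by blast
    then show ?thesis using True ne[of "cntf L ys"] mem[of "cntf L ys"]
      by (simp add: indicator_def)
  qed simp
  finally show ?thesis .
qed

lemma pmf_DL':
  assumes "set ys \<subseteq> {..<L}"
  shows "pmf (DL L Q) ys = (\<Prod>l<L. pmf (Q l) (count (mset ys) l) * fact (count (mset ys) l)) / fact (length ys)"
proof -
  have c0: "\<forall>l. l \<notin> {..<L} \<longrightarrow> cntf L ys l = 0" by (simp add: cntf_def)
  have pi: "pmf (Pi_pmf {..<L} 0 Q) (cntf L ys) = (\<Prod>l<L. pmf (Q l) (count (mset ys) l))"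
    by (subst pmf_Pi') (auto simp: cntf_def)
  have pf: "(\<Prod>x\<in>set_mset (mset ys). fact (count (mset ys) x) :: nat) = (\<Prod>l<L. fact (count (mset ys) l))"
  proof (intro prod.mono_neutral_left)
    show "\<forall>i\<in>{..<L} - set_mset (mset ys). fact (count (mset ys) i) = 1"
    proof
      fix i assume "i \<in> {..<L} - set_mset (mset ys)"
      hence "count (mset ys) i = 0" by (simp add: count_mset_0_iff)
      thus "fact (count (mset ys) i) = 1" by (metis fact_0)
    qed
  qed (use assms in auto)
  have ca: "real (card (permutations_of_multiset (mset ys))) * (\<Prod>l<L. fact (count (mset ys) l)) = fact (length ys)"
  proof -
    have n: "card (permutations_of_multiset (mset ys)) * (\<Prod>l<L. fact (count (mset ys) l)) = (fact (length ys) :: nat)"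
      using card_permutations_of_multiset_aux[of "mset ys"] unfolding pf size_mset .
    have "real (card (permutations_of_multiset (mset ys)) * (\<Prod>l<L. fact (count (mset ys) l))) = real (fact (length ys))"
      using n by (rule arg_cong)
    thus ?thesis by (simp only: of_nat_mult of_nat_prod of_nat_fact)
  qed
  have pos: "(\<Prod>l<L. fact (count (mset ys) l) :: real) > 0" by (intro prod_pos) auto
  have cpos: "real (card (permutations_of_multiset (mset ys))) > 0"
    using ca pos by (metis fact_gt_zero mult_eq_0_iff of_nat_0_less_iff order_less_irrefl not_gr0 of_nat_0)
  have "pmf (DL L Q) ys = (\<Prod>l<L. pmf (Q l) (count (mset ys) l)) / card (permutations_of_multiset (mset ys))"
    using assms by (simp add: pmf_DL pi)
  also have "\<dots> = (\<Prod>l<L. pmf (Q l) (count (mset ys) l)) * (\<Prod>l<L. fact (count (mset ys) l)) / fact (length ys)"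
    using ca cpos by (simp add: field_simps)
  also have "\<dots> = (\<Prod>l<L. pmf (Q l) (count (mset ys) l) * fact (count (mset ys) l)) / fact (length ys)"
    by (simp add: prod.distrib)
  finally show ?thesis .
qed

lemma pmf_NC_DL:
  "pmf (map_pmf (\<lambda>ys. (length ys, part_list L ys)) (DL L Q)) (N, C) = (\<Sum>ys\<in>XC L N C. pmf (DL L Q) ys)"
proof -
  let ?A = "(\<lambda>ys. (length ys, part_list L ys)) -` {(N, C)}"
  have sub: "set_pmf (DL L Q) \<subseteq> {ys. set ys \<subseteq> {..<L}}"
  proof
    fix zs assume "zs \<in> set_pmf (DL L Q)"
    hence "pmf (DL L Q) zs \<noteq> 0" by (simp add: set_pmf_iff)
    thus "zs \<in> {ys. set ys \<subseteq> {..<L}}" using pmf_DL[of L Q zs] by (auto split: if_splits)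
  qed
  have fin: "finite (XC L N C)"
    by (rule finite_subset[OF _ finite_lists_length_eq[of "{..<L}" N]]) (auto simp: XC_def)
  have "pmf (map_pmf (\<lambda>ys. (length ys, part_list L ys)) (DL L Q)) (N, C) = measure (DL L Q) ?A"
    by (rule pmf_map)
  also have "\<dots> = measure (DL L Q) (?A \<inter> set_pmf (DL L Q))" by (rule measure_Int_set_pmf[symmetric])
  also have "?A \<inter> set_pmf (DL L Q) = XC L N C \<inter> set_pmf (DL L Q)"
    using sub by (auto simp: XC_def)
  also have "measure (DL L Q) \<dots> = measure (DL L Q) (XC L N C)" by (rule measure_Int_set_pmf)
  also have "\<dots> = (\<Sum>ys\<in>XC L N C. pmf (DL L Q) ys)" using fin by (rule measure_measure_pmf_finite)
  finally show ?thesis .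
qed

lemma pmf_po_fact: "pmf (po_pmf \<mu>) k * fact k = exp (- max \<mu> 0) * (max \<mu> 0) ^ k"
  by (cases "0 < \<mu>") (auto simp: po_pmf_def indicator_def)

definition Bl :: "nat list \<Rightarrow> nat \<Rightarrow> nat set" where
  "Bl ys l = {i \<in> {1..length ys}. ys ! (i - 1) = l}"

lemma part_list_Bl: "part_list L ys = {Bl ys l | l. l < L} - {{}}"
  by (simp add: part_list_def parent_partition_def Bl_def)

lemma card_Bl: "card (Bl ys l) = count (mset ys) l"
proof -
  have "Bl ys l = Suc ` {i. i < length ys \<and> l = ys ! i}"
  proof (intro set_eqI iffI)
    fix x assume "x \<in> Bl ys l"
    thus "x \<in> Suc ` {i. i < length ys \<and> l = ys ! i}" unfolding Bl_def
      by (intro image_eqI[where x="x - 1"]) auto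
  qed (auto simp: Bl_def)
  hence "card (Bl ys l) = card {i. i < length ys \<and> l = ys ! i}" by (simp add: card_image)
  also have "\<dots> = count (mset ys) l"
    by (simp add: count_mset count_list_eq_length_filter length_filter_conv_card)
  finally show ?thesis .
qed

lemma sum_count_XC:
  assumes "ys \<in> XC L N C" shows "(\<Sum>l<L. count (mset ys) l) = N"
  using assms sum_count_set[of ys "{..<L}"] by (simp add: XC_def count_mset)

lemma XC_block:
  assumes "ys \<in> XC L N C" "B \<in> C"
  shows "\<exists>l<L. B = Bl ys l \<and> B \<noteq> {} \<and> B \<subseteq> {1..N} \<and> Min B \<in> B \<and> ys ! (Min B - 1) = l"
proof -
  from assms obtain l where l: "l < L" "B = Bl ys l" "B \<noteq> {}"
    by (auto simp: XC_def part_list_Bl)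
  have sub: "B \<subseteq> {1..N}" using l assms(1) by (auto simp: Bl_def XC_def)
  hence fin: "finite B" by (rule finite_subset) simp
  have "Min B \<in> B" using fin l(3) by (rule Min_in)
  hence "ys ! (Min B - 1) = l" using l(2) by (simp add: Bl_def)
  with l sub \<open>Min B \<in> B\<close> show ?thesis by blast
qed

lemma prod_XC:
  assumes "ys \<in> XC L N C" "h 0 = 1"
  shows "(\<Prod>l<L. h (count (mset ys) l)) = (\<Prod>B\<in>C. h (card B))"
proof -
  define S where "S = {l. l < L \<and> Bl ys l \<noteq> {}}"
  have CS: "C = Bl ys ` S" using assms(1) by (auto simp: XC_def part_list_Bl S_def)
  have inj: "inj_on (Bl ys) S"
  proof
    fix l l' assume "l \<in> S" "l' \<in> S" "Bl ys l = Bl ys l'"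
    then obtain i where "i \<in> Bl ys l" "i \<in> Bl ys l'" by (auto simp: S_def)
    thus "l = l'" by (auto simp: Bl_def)
  qed
  have "(\<Prod>B\<in>C. h (card B)) = (\<Prod>l\<in>S. h (card (Bl ys l)))"
    unfolding CS by (subst prod.reindex[OF inj]) simp
  also have "\<dots> = (\<Prod>l\<in>S. h (count (mset ys) l))" by (simp add: card_Bl)
  also have "\<dots> = (\<Prod>l<L. h (count (mset ys) l))"
  proof (rule prod.mono_neutral_left)
    show "\<forall>i\<in>{..<L} - S. h (count (mset ys) i) = 1"
    proof
      fix i assume "i \<in> {..<L} - S"
      hence "Bl ys i = {}" by (auto simp: S_def)
      hence c: "count (mset ys) i = 0" using card_Bl[of ys i] by simp
      show "h (count (mset ys) i) = 1" unfolding c by (rule assms(2))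
    qed
  qed (auto simp: S_def)
  finally show ?thesis by simp
qed

lemma partition_blk:
  assumes "partition_on A C" "i \<in> A"
  shows "(THE B. B \<in> C \<and> i \<in> B) \<in> C" "i \<in> (THE B. B \<in> C \<and> i \<in> B)"
    and "\<And>B. B \<in> C \<Longrightarrow> i \<in> B \<Longrightarrow> (THE B. B \<in> C \<and> i \<in> B) = B"
proof -
  have ex: "\<exists>!B. B \<in> C \<and> i \<in> B"
  proof -
    from assms obtain B where "B \<in> C" "i \<in> B" by (auto simp: partition_on_def)
    moreover have "B' = B" if "B' \<in> C" "i \<in> B'" for B'
      using assms(1) that \<open>B \<in> C\<close> \<open>i \<in> B\<close> unfolding partition_on_def disjoint_def by blast
    ultimately show ?thesis by blast
  qed
  show "(THE B. B \<in> C \<and> i \<in> B) \<in> C" "i \<in> (THE B. B \<in> C \<and> i \<in> B)"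
    using theI'[OF ex] by auto
  show "\<And>B. B \<in> C \<Longrightarrow> i \<in> B \<Longrightarrow> (THE B. B \<in> C \<and> i \<in> B) = B"
    using ex by (rule the1_equality) auto
qed

lemma card_XC:
  assumes part: "partition_on {1..N} C"
  shows "card (XC L N C) = (\<Prod>i<card C. L - i)"
proof -
  define Inj where "Inj = {g \<in> C \<rightarrow>\<^sub>E {..<L}. inj_on g C}"
  define \<phi> where "\<phi> ys = restrict (\<lambda>B. ys ! (Min B - 1)) C" for ys :: "nat list"
  define blk where "blk i = (THE B. B \<in> C \<and> i \<in> B)" for i
  have finC: "finite C" using part unfolding partition_on_def by (metis finite_UnionD finite_atLeastAtMost)
  have cardInj: "card Inj = (\<Prod>i<card C. L - i)"
    unfolding Inj_def using card_inj_on_subset_funcset[OF finC, of "{..<L}" C] finC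
    by (simp add: atLeast0LessThan)
  have injphi: "inj_on \<phi> (XC L N C)"
  proof
    fix ys ys' assume y: "ys \<in> XC L N C" and y': "ys' \<in> XC L N C" and e: "\<phi> ys = \<phi> ys'"
    show "ys = ys'"
    proof (rule nth_equalityI)
      show "length ys = length ys'" using y y' by (simp add: XC_def)
      fix i assume "i < length ys"
      hence i: "Suc i \<in> {1..N}" using y by (simp add: XC_def)
      then obtain B where B: "B \<in> C" "Suc i \<in> B" using part unfolding partition_on_def by blast
      obtain l where l: "B = Bl ys l" "ys ! (Min B - 1) = l" using XC_block[OF y B(1)] by blast
      obtain l' where l': "B = Bl ys' l'" "ys' ! (Min B - 1) = l'" using XC_block[OF y' B(1)] by blast
      have "\<phi> ys B = \<phi> ys' B" using e by simp
      hence "l = l'" using l l' B by (simp add: \<phi>_def)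
      moreover have "ys ! i = l" using B l by (simp add: Bl_def)
      moreover have "ys' ! i = l'" using B l' by (simp add: Bl_def)
      ultimately show "ys ! i = ys' ! i" by simp
    qed
  qed
  have img: "\<phi> ` XC L N C = Inj"
  proof
    show "\<phi> ` XC L N C \<subseteq> Inj"
    proof
      fix g assume "g \<in> \<phi> ` XC L N C"
      then obtain ys where y: "ys \<in> XC L N C" and g: "g = \<phi> ys" by blast
      have "g \<in> C \<rightarrow>\<^sub>E {..<L}"
        using XC_block[OF y] by (auto simp: g \<phi>_def)
      moreover have "inj_on g C"
      proof
        fix B B' assume "B \<in> C" "B' \<in> C" "g B = g B'"
        thus "B = B'" using XC_block[OF y \<open>B \<in> C\<close>] XC_block[OF y \<open>B' \<in> C\<close>] by (auto simp: g \<phi>_def)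
      qed
      ultimately show "g \<in> Inj" by (simp add: Inj_def)
    qed
  next
    show "Inj \<subseteq> \<phi> ` XC L N C"
    proof
      fix g assume g: "g \<in> Inj"
      define ys where "ys = map (\<lambda>i. g (blk (Suc i))) [0..<N]"
      have blkC: "blk i \<in> C" if "i \<in> {1..N}" for i
        unfolding blk_def by (rule partition_blk(1)[OF part that])
      have blki: "i \<in> blk i" if "i \<in> {1..N}" for i
        unfolding blk_def by (rule partition_blk(2)[OF part that])
      have blkeq: "blk i = B" if "B \<in> C" "i \<in> B" for i B
      proof -
        have "i \<in> {1..N}" using part that by (auto simp: partition_on_def)
        thus ?thesis using partition_blk(3)[OF part _ that] by (simp add: blk_def)
      qed
      have gC: "g B < L" if "B \<in> C" for B using g that by (auto simp: Inj_def)
      have ginj: "inj_on g C" using g by (simp add: Inj_def)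
      have len: "length ys = N" by (simp add: ys_def)
      have nth: "ys ! (i - 1) = g (blk i)" if "i \<in> {1..N}" for i
      proof -
        from that have a: "i - 1 < N" and b: "Suc (i - 1) = i" by auto
        have "ys ! (i - 1) = g (blk (Suc (i - 1)))" using a by (simp add: ys_def del: Suc_diff_1)
        thus ?thesis using b by simp
      qed
      have BlB: "Bl ys (g B) = B" if B: "B \<in> C" for B
      proof
        show "Bl ys (g B) \<subseteq> B"
        proof
          fix j assume "j \<in> Bl ys (g B)"
          hence j: "j \<in> {1..N}" "g (blk j) = g B" using nth len by (auto simp: Bl_def)
          hence "blk j = B" using ginj blkC[OF j(1)] B by (auto dest: inj_onD)
          thus "j \<in> B" using blki[OF j(1)] by simp
        qed
        show "B \<subseteq> Bl ys (g B)"
        proof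
          fix j assume j: "j \<in> B"
          hence j1: "j \<in> {1..N}" using part B by (auto simp: partition_on_def)
          thus "j \<in> Bl ys (g B)" using nth[OF j1] blkeq[OF B j] len by (simp add: Bl_def)
        qed
      qed
      have ysX: "ys \<in> XC L N C"
      proof -
        have "set ys \<subseteq> {..<L}" using gC blkC by (auto simp: ys_def)
        moreover have "part_list L ys = C"
        proof
          show "part_list L ys \<subseteq> C"
          proof
            fix A assume "A \<in> part_list L ys"
            then obtain l where l: "A = Bl ys l" "A \<noteq> {}" by (auto simp: part_list_Bl)
            then obtain i where i: "i \<in> Bl ys l" by blast
            hence i1: "i \<in> {1..N}" and gl: "g (blk i) = l" using nth len by (auto simp: Bl_def)
            have "Bl ys l = blk i" using BlB[OF blkC[OF i1]] gl by simp
            thus "A \<in> C" using l blkC[OF i1] by simp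
          qed
          show "C \<subseteq> part_list L ys"
          proof
            fix B assume B: "B \<in> C"
            have "B \<noteq> {}" using part B by (auto simp: partition_on_def)
            thus "B \<in> part_list L ys" using BlB[OF B] gC[OF B] unfolding part_list_Bl by blast
          qed
        qed
        ultimately show ?thesis using len by (simp add: XC_def)
      qed
      have "\<phi> ys = g"
      proof
        fix B show "\<phi> ys B = g B"
        proof (cases "B \<in> C")
          case True
          obtain l where l: "B = Bl ys l" "B \<noteq> {}" "B \<subseteq> {1..N}" "Min B \<in> B" "ys ! (Min B - 1) = l"
            using XC_block[OF ysX True] by blast
          have "ys ! (Min B - 1) = g (blk (Min B))" using l by (intro nth) auto
          also have "blk (Min B) = B" using blkeq[OF True l(4)] .
          finally show ?thesis using True by (simp add: \<phi>_def)
        next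
          case False thus ?thesis using g by (auto simp: \<phi>_def Inj_def)
        qed
      qed
      thus "g \<in> \<phi> ` XC L N C" using ysX by blast
    qed
  qed
  have "card (XC L N C) = card Inj" using card_image[OF injphi] img by simp
  thus ?thesis using cardInj by simp
qed

definition gk :: "real \<Rightarrow> real \<Rightarrow> real \<Rightarrow> real" where
  "gk s b w = (if 0 < w then w powr (s - 1) * exp (- b * w) else 0)"

lemma gk_measurable[measurable]: "gk s b \<in> borel_measurable borel"
  unfolding gk_def by measurable

lemma gk_nonneg: "0 \<le> gk s b w" by (simp add: gk_def)

lemma gamma_int:
  assumes s: "0 < s" and b: "0 < b"
  shows "(\<integral>\<^sup>+ w. ennreal (gk s b w) \<partial>lborel) = ennreal (Gamma s / b powr s)"
proof -
  have "((\<lambda>t. t powr (s - 1) / exp t) has_integral Gamma s) {0..}" using s by (rule Gamma_integral_real)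
  hence "(\<integral>\<^sup>+ t. ennreal (t powr (s - 1) / exp t) * indicator {0..} t \<partial>lborel) = ennreal (Gamma s)"
    by (intro nn_integral_has_integral_lebesgue') auto
  moreover have "ennreal (t powr (s - 1) / exp t) * indicator {0..} t = ennreal (gk s 1 t)" for t :: real
    by (cases "t > 0"; cases "t = 0") (auto simp: gk_def indicator_def exp_minus field_simps)
  ultimately have H: "(\<integral>\<^sup>+ t. ennreal (gk s 1 t) \<partial>lborel) = ennreal (Gamma s)" by simp
  have "(\<integral>\<^sup>+ t. ennreal (gk s 1 t) \<partial>lborel) = ennreal \<bar>b\<bar> * (\<integral>\<^sup>+ x. ennreal (gk s 1 (0 + b * x)) \<partial>lborel)"
    using b by (intro nn_integral_real_affine) auto
  also have "(\<lambda>x. ennreal (gk s 1 (0 + b * x))) = (\<lambda>x. ennreal (b powr (s - 1)) * ennreal (gk s b x))"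
  proof
    fix x :: real
    show "ennreal (gk s 1 (0 + b * x)) = ennreal (b powr (s - 1)) * ennreal (gk s b x)"
      using b by (cases "x > 0") (auto simp: gk_def powr_mult zero_less_mult_iff ennreal_mult[symmetric])
  qed
  also have "(\<integral>\<^sup>+ x. ennreal (b powr (s - 1)) * ennreal (gk s b x) \<partial>lborel)
      = ennreal (b powr (s - 1)) * (\<integral>\<^sup>+ x. ennreal (gk s b x) \<partial>lborel)"
    by (rule nn_integral_cmult) measurable
  finally have "ennreal (Gamma s) = ennreal (b * b powr (s - 1)) * (\<integral>\<^sup>+ x. ennreal (gk s b x) \<partial>lborel)"
    using H b by (simp add: ennreal_mult mult.assoc)
  also have "b * b powr (s - 1) = b powr s" using b by (simp add: powr_diff field_simps)
  finally have e: "ennreal (Gamma s) = ennreal (b powr s) * (\<integral>\<^sup>+ x. ennreal (gk s b x) \<partial>lborel)" .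
  have bp: "b powr s > 0" using b by simp
  have "(\<integral>\<^sup>+ x. ennreal (gk s b x) \<partial>lborel) = ennreal (1 / b powr s) * (ennreal (b powr s) * (\<integral>\<^sup>+ x. ennreal (gk s b x) \<partial>lborel))"
    using bp by (simp add: mult.assoc[symmetric] ennreal_mult[symmetric])
  also have "\<dots> = ennreal (Gamma s / b powr s)"
    unfolding e[symmetric] using bp s by (simp add: ennreal_mult[symmetric] Gamma_real_pos less_imp_le)
  finally show ?thesis .
qed

lemma gamma_dens_measurable[measurable]: "gamma_dens a b \<in> borel_measurable borel"
  unfolding gamma_dens_def by measurable

lemma gamma_dens_nonneg: "0 < a \<Longrightarrow> 0 \<le> gamma_dens a b w"
  using Gamma_real_pos[of a] by (simp add: gamma_dens_def)

lemma latent_marginal: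
  assumes X: "X \<in> sets borel"
    and sfT: "sigma_finite_measure M\<Theta>"
    and pm: "case_prod pmt \<in> borel_measurable (restrict_space lborel X \<Otimes>\<^sub>M M\<Theta>)"
    and one: "(\<integral>\<^sup>+ (m, \<theta>). ennreal (pmt m \<theta>) \<partial>(restrict_space lborel X \<Otimes>\<^sub>M M\<Theta>)) = 1"
    and h[measurable]: "h \<in> borel_measurable borel"
    and nn: "\<And>m \<theta>. 0 \<le> pmt m \<theta>" and a: "0 < \<alpha>"
  shows "(\<integral>\<^sup>+ z. h (fst (snd z)) \<partial>latent_measure X M\<Theta> \<alpha> \<beta> pmt)
       = (\<integral>\<^sup>+ w. ennreal (gamma_dens \<alpha> \<beta> w) * h w \<partial>lborel)"
proof -
  let ?RX = "restrict_space lborel X"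
  let ?M = "?RX \<Otimes>\<^sub>M (lborel \<Otimes>\<^sub>M M\<Theta>)"
  interpret T: sigma_finite_measure M\<Theta> by (rule sfT)
  interpret RX: sigma_finite_measure ?RX
    using sigma_finite_measure_restrict_space[OF sigma_finite_lborel, of X] X by simp
  interpret LT: pair_sigma_finite lborel M\<Theta> by unfold_locales
  have pm2: "(\<lambda>z. pmt (fst z) (snd (snd z))) \<in> borel_measurable ?M"
  proof -
    have "(\<lambda>z. (fst z, snd (snd z))) \<in> measurable ?M (?RX \<Otimes>\<^sub>M M\<Theta>)" by measurable
    from measurable_compose[OF this pm] show ?thesis by simp
  qed
  define f where "f z = ennreal (gamma_dens \<alpha> \<beta> (fst (snd z)) * pmt (fst z) (snd (snd z)))" for z :: "'a \<times> real \<times> 'b"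
  have fm[measurable]: "f \<in> borel_measurable ?M" unfolding f_def using pm2 by measurable
  have lat: "latent_measure X M\<Theta> \<alpha> \<beta> pmt = density ?M f"
    unfolding latent_measure_def f_def by (simp add: case_prod_beta')
  define P where "P m = (\<integral>\<^sup>+ \<theta>. ennreal (pmt m \<theta>) \<partial>M\<Theta>)" for m
  define c where "c = (\<integral>\<^sup>+ w. ennreal (gamma_dens \<alpha> \<beta> w) * h w \<partial>lborel)"
  have "(\<integral>\<^sup>+ z. h (fst (snd z)) \<partial>latent_measure X M\<Theta> \<alpha> \<beta> pmt) = (\<integral>\<^sup>+ z. f z * h (fst (snd z)) \<partial>?M)"
    unfolding lat by (rule nn_integral_density) (use fm in auto)
  also have "\<dots> = (\<integral>\<^sup>+ m. \<integral>\<^sup>+ y. f (m, y) * h (fst y) \<partial>(lborel \<Otimes>\<^sub>M M\<Theta>) \<partial>?RX)"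
  proof -
    have "(\<integral>\<^sup>+ m. \<integral>\<^sup>+ y. (\<lambda>z. f z * h (fst (snd z))) (m, y) \<partial>(lborel \<Otimes>\<^sub>M M\<Theta>) \<partial>?RX)
        = (\<integral>\<^sup>+ z. f z * h (fst (snd z)) \<partial>?M)"
      by (rule sigma_finite_measure.nn_integral_fst[OF sigma_finite_pair_measure[OF sigma_finite_lborel sfT]]) measurable
    thus ?thesis by simp
  qed
  also have "\<dots> = (\<integral>\<^sup>+ m. c * P m \<partial>?RX)"
  proof (rule nn_integral_cong)
    fix m assume "m \<in> space ?RX"
    hence mX: "m \<in> X" by (simp add: space_restrict_space)
    have pmm[measurable]: "pmt m \<in> borel_measurable M\<Theta>"
      using measurable_Pair2[OF pm, of m] mX by (simp add: space_restrict_space)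
    have "(\<integral>\<^sup>+ y. f (m, y) * h (fst y) \<partial>(lborel \<Otimes>\<^sub>M M\<Theta>))
        = (\<integral>\<^sup>+ w. \<integral>\<^sup>+ \<theta>. f (m, w, \<theta>) * h w \<partial>M\<Theta> \<partial>lborel)"
    proof -
      have "(\<integral>\<^sup>+ w. \<integral>\<^sup>+ \<theta>. (\<lambda>y. f (m, y) * h (fst y)) (w, \<theta>) \<partial>M\<Theta> \<partial>lborel)
          = (\<integral>\<^sup>+ y. f (m, y) * h (fst y) \<partial>(lborel \<Otimes>\<^sub>M M\<Theta>))"
      proof (rule T.nn_integral_fst)
        have e: "(\<lambda>y. f (m, y) * h (fst y)) = (\<lambda>y. ennreal (gamma_dens \<alpha> \<beta> (fst y) * pmt m (snd y)) * h (fst y))"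
          by (simp add: f_def fun_eq_iff)
        show "(\<lambda>y. f (m, y) * h (fst y)) \<in> borel_measurable (lborel \<Otimes>\<^sub>M M\<Theta>)"
          unfolding e by measurable
      qed
      thus ?thesis by simp
    qed
    also have "\<dots> = (\<integral>\<^sup>+ w. (ennreal (gamma_dens \<alpha> \<beta> w) * h w) * P m \<partial>lborel)"
    proof (rule nn_integral_cong)
      fix w :: real
      have "(\<integral>\<^sup>+ \<theta>. f (m, w, \<theta>) * h w \<partial>M\<Theta>) = (\<integral>\<^sup>+ \<theta>. (ennreal (gamma_dens \<alpha> \<beta> w) * h w) * ennreal (pmt m \<theta>) \<partial>M\<Theta>)"
        by (intro nn_integral_cong) (simp add: f_def ennreal_mult nn gamma_dens_nonneg[OF a] mult_ac)
      also have "\<dots> = (ennreal (gamma_dens \<alpha> \<beta> w) * h w) * P m"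
        unfolding P_def by (rule nn_integral_cmult) measurable
      finally show "(\<integral>\<^sup>+ \<theta>. f (m, w, \<theta>) * h w \<partial>M\<Theta>) = (ennreal (gamma_dens \<alpha> \<beta> w) * h w) * P m" .
    qed
    also have "\<dots> = c * P m" unfolding c_def by (rule nn_integral_multc) measurable
    finally show "(\<integral>\<^sup>+ y. f (m, y) * h (fst y) \<partial>(lborel \<Otimes>\<^sub>M M\<Theta>)) = c * P m" .
  qed
  also have "\<dots> = c * (\<integral>\<^sup>+ m. P m \<partial>?RX)"
    unfolding P_def by (rule nn_integral_cmult) (use pm in measurable)
  also have "(\<integral>\<^sup>+ m. P m \<partial>?RX) = 1"
    unfolding P_def using T.nn_integral_fst[of "\<lambda>(m, \<theta>). ennreal (pmt m \<theta>)" ?RX] pm one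
    by simp
  finally show ?thesis by (simp add: c_def)
qed

definition Ef :: "nat \<Rightarrow> real \<Rightarrow> real" where
  "Ef c w = exp (- max w 0) * (max w 0) ^ c"

lemma Ef_measurable[measurable]: "Ef c \<in> borel_measurable borel"
  unfolding Ef_def by measurable

lemma Ef_nonneg: "0 \<le> Ef c w" by (simp add: Ef_def)

definition Gc :: "real \<Rightarrow> real \<Rightarrow> nat \<Rightarrow> real" where
  "Gc \<alpha> \<beta> c = (\<beta> / (1 + \<beta>)) powr \<alpha> * (1 / (1 + \<beta>)) ^ c * (Gamma (real c + \<alpha>) / Gamma \<alpha>)"

lemma gamma_dens_gk: "0 < \<alpha> \<Longrightarrow> 0 < \<beta> \<Longrightarrow> gamma_dens \<alpha> \<beta> w = \<beta> powr \<alpha> / Gamma \<alpha> * gk \<alpha> \<beta> w"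
  by (simp add: gamma_dens_def gk_def)

lemma GE:
  assumes a: "0 < \<alpha>" and b: "0 < \<beta>"
  shows "(\<integral>\<^sup>+ w. ennreal (gamma_dens \<alpha> \<beta> w) * ennreal (Ef c w) \<partial>lborel) = ennreal (Gc \<alpha> \<beta> c)"
proof -
  have Ga: "Gamma \<alpha> > 0" using a by (rule Gamma_real_pos)
  have pt: "ennreal (gamma_dens \<alpha> \<beta> w) * ennreal (Ef c w)
      = ennreal (\<beta> powr \<alpha> / Gamma \<alpha>) * ennreal (gk (real c + \<alpha>) (1 + \<beta>) w)" for w
  proof (cases "w > 0")
    case True
    have "w powr (\<alpha> - 1) * w ^ c = w powr (real c + \<alpha> - 1)"
      using True by (simp add: powr_realpow[symmetric] powr_add[symmetric] algebra_simps)
    moreover have "exp (- \<beta> * w) * exp (- w) = exp (- (1 + \<beta>) * w)"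
      by (simp add: exp_add[symmetric] algebra_simps)
    ultimately have "gamma_dens \<alpha> \<beta> w * Ef c w = \<beta> powr \<alpha> / Gamma \<alpha> * gk (real c + \<alpha>) (1 + \<beta>) w"
      using True by (simp add: gamma_dens_def Ef_def gk_def) (metis (no_types, lifting) mult.commute mult.left_commute)
    thus ?thesis using Ga b True
      by (simp add: ennreal_mult[symmetric] gamma_dens_nonneg[OF a] Ef_nonneg gk_nonneg)
  next
    case False
    thus ?thesis by (simp add: gamma_dens_def gk_def)
  qed
  have "(\<integral>\<^sup>+ w. ennreal (gamma_dens \<alpha> \<beta> w) * ennreal (Ef c w) \<partial>lborel)
      = ennreal (\<beta> powr \<alpha> / Gamma \<alpha>) * (\<integral>\<^sup>+ w. ennreal (gk (real c + \<alpha>) (1 + \<beta>) w) \<partial>lborel)"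
    unfolding pt by (rule nn_integral_cmult) measurable
  also have "\<dots> = ennreal (\<beta> powr \<alpha> / Gamma \<alpha>) * ennreal (Gamma (real c + \<alpha>) / (1 + \<beta>) powr (real c + \<alpha>))"
    using a b by (subst gamma_int) auto
  also have "\<dots> = ennreal (\<beta> powr \<alpha> / Gamma \<alpha> * (Gamma (real c + \<alpha>) / (1 + \<beta>) powr (real c + \<alpha>)))"
    using Ga a b by (subst ennreal_mult) (auto intro!: divide_nonneg_pos Gamma_real_pos less_imp_le)
  also have "\<beta> powr \<alpha> / Gamma \<alpha> * (Gamma (real c + \<alpha>) / (1 + \<beta>) powr (real c + \<alpha>)) = Gc \<alpha> \<beta> c"
    using b by (simp add: Gc_def powr_add powr_divide powr_realpow[symmetric] field_simps)
  finally show ?thesis .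
qed

lemma gamma_total:
  assumes a: "0 < \<alpha>" and b: "0 < \<beta>"
  shows "(\<integral>\<^sup>+ w. ennreal (gamma_dens \<alpha> \<beta> w) \<partial>lborel) = 1"
proof -
  have Ga: "Gamma \<alpha> > 0" using a by (rule Gamma_real_pos)
  have "(\<integral>\<^sup>+ w. ennreal (gamma_dens \<alpha> \<beta> w) \<partial>lborel) = (\<integral>\<^sup>+ w. ennreal (\<beta> powr \<alpha> / Gamma \<alpha>) * ennreal (gk \<alpha> \<beta> w) \<partial>lborel)"
  proof (intro nn_integral_cong)
    fix w :: real
    have "ennreal (gamma_dens \<alpha> \<beta> w) = ennreal (\<beta> powr \<alpha> / Gamma \<alpha> * gk \<alpha> \<beta> w)"
      using a b by (simp add: gamma_dens_gk)
    also have "\<dots> = ennreal (\<beta> powr \<alpha> / Gamma \<alpha>) * ennreal (gk \<alpha> \<beta> w)"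
      using Ga by (intro ennreal_mult) (auto simp: gk_nonneg)
    finally show "ennreal (gamma_dens \<alpha> \<beta> w) = ennreal (\<beta> powr \<alpha> / Gamma \<alpha>) * ennreal (gk \<alpha> \<beta> w)" .
  qed
  also have "\<dots> = ennreal (\<beta> powr \<alpha> / Gamma \<alpha>) * (\<integral>\<^sup>+ w. ennreal (gk \<alpha> \<beta> w) \<partial>lborel)"
    by (rule nn_integral_cmult) measurable
  also have "\<dots> = ennreal (\<beta> powr \<alpha> / Gamma \<alpha>) * ennreal (Gamma \<alpha> / \<beta> powr \<alpha>)"
    using a b by (simp add: gamma_int)
  also have "\<dots> = 1" using Ga b by (simp add: ennreal_mult[symmetric])
  finally show ?thesis .
qed

lemma latent_prob:
  assumes X: "X \<in> sets borel"
    and sfT: "sigma_finite_measure M\<Theta>"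
    and pm: "case_prod pmt \<in> borel_measurable (restrict_space lborel X \<Otimes>\<^sub>M M\<Theta>)"
    and one: "(\<integral>\<^sup>+ (m, \<theta>). ennreal (pmt m \<theta>) \<partial>(restrict_space lborel X \<Otimes>\<^sub>M M\<Theta>)) = 1"
    and nn: "\<And>m \<theta>. 0 \<le> pmt m \<theta>" and a: "0 < \<alpha>" and b: "0 < \<beta>"
  shows "prob_space (latent_measure X M\<Theta> \<alpha> \<beta> pmt)"
proof
  have "emeasure (latent_measure X M\<Theta> \<alpha> \<beta> pmt) (space (latent_measure X M\<Theta> \<alpha> \<beta> pmt))
      = (\<integral>\<^sup>+ z. (\<lambda>_. 1::ennreal) (fst (snd z)) \<partial>latent_measure X M\<Theta> \<alpha> \<beta> pmt)"
    by (simp add: nn_integral_const)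
  also have "\<dots> = (\<integral>\<^sup>+ w. ennreal (gamma_dens \<alpha> \<beta> w) * 1 \<partial>lborel)"
    by (rule latent_marginal[OF X sfT pm one _ nn a]) simp
  also have "\<dots> = 1" using gamma_total[OF a b] by simp
  finally show "emeasure (latent_measure X M\<Theta> \<alpha> \<beta> pmt) (space (latent_measure X M\<Theta> \<alpha> \<beta> pmt)) = 1" .
qed

lemma space_latent:
  "space (latent_measure X M\<Theta> \<alpha> \<beta> pmt) = X \<times> UNIV \<times> space M\<Theta>"
  by (simp add: latent_measure_def space_pair_measure space_restrict_space)

lemma prod_Gc:
  assumes "ys \<in> XC L N C" "0 < \<alpha>"
  shows "(\<Prod>l<L. Gc \<alpha> \<beta> (count (mset ys) l))
     = ((\<beta> / (1 + \<beta>)) powr \<alpha>) ^ L * (1 / (1 + \<beta>)) ^ N * (\<Prod>B\<in>C. Gamma (real (card B) + \<alpha>) / Gamma \<alpha>)"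
proof -
  have G0: "Gamma \<alpha> \<noteq> 0" using Gamma_real_pos[OF assms(2)] by simp
  have "(\<Prod>l<L. Gc \<alpha> \<beta> (count (mset ys) l))
     = (\<Prod>l<L. (\<beta> / (1 + \<beta>)) powr \<alpha>) * (\<Prod>l<L. (1 / (1 + \<beta>)) ^ count (mset ys) l)
       * (\<Prod>l<L. Gamma (real (count (mset ys) l) + \<alpha>) / Gamma \<alpha>)"
    by (simp only: Gc_def prod.distrib prod_constant card_lessThan)
  also have "(\<Prod>l<L. (1 / (1 + \<beta>)) ^ count (mset ys) l) = (1 / (1 + \<beta>)) ^ N"
    using sum_count_XC[OF assms(1)] by (simp add: power_sum[symmetric])
  also have "(\<Prod>l<L. Gamma (real (count (mset ys) l) + \<alpha>) / Gamma \<alpha>) = (\<Prod>B\<in>C. Gamma (real (card B) + \<alpha>) / Gamma \<alpha>)"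
    using prod_XC[OF assms(1), of "\<lambda>k. Gamma (real k + \<alpha>) / Gamma \<alpha>"] G0 by simp
  finally show ?thesis by simp
qed

lemma Gc_nonneg:
  assumes a: "0 < \<alpha>" and b: "0 < \<beta>"
  shows "0 \<le> Gc \<alpha> \<beta> c"
proof -
  have "0 \<le> Gamma (real c + \<alpha>) / Gamma \<alpha>"
    using a by (intro divide_nonneg_pos less_imp_le[OF Gamma_real_pos] Gamma_real_pos) auto
  moreover have "0 \<le> (1 / (1 + \<beta>)) ^ c" using b by simp
  moreover have "0 \<le> (\<beta> / (1 + \<beta>)) powr \<alpha>" by simp
  ultimately show ?thesis unfolding Gc_def by (intro mult_nonneg_nonneg)
qed

lemma T_nonneg:
  assumes a: "0 < \<alpha>" and b: "0 < \<beta>"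
  shows "0 \<le> ((\<beta> / (1 + \<beta>)) powr \<alpha>) ^ L * (1 / (1 + \<beta>)) ^ N * (\<Prod>B\<in>C. Gamma (real (card B) + \<alpha>) / Gamma \<alpha>)"
proof -
  have "0 \<le> Gamma (real (card B) + \<alpha>) / Gamma \<alpha>" for B
    using a by (intro divide_nonneg_pos less_imp_le[OF Gamma_real_pos] Gamma_real_pos) auto
  hence "0 \<le> (\<Prod>B\<in>C. Gamma (real (card B) + \<alpha>) / Gamma \<alpha>)" by (intro prod_nonneg) auto
  moreover have "0 \<le> (1 / (1 + \<beta>)) ^ N" using b by simp
  moreover have "0 \<le> ((\<beta> / (1 + \<beta>)) powr \<alpha>) ^ L" by simp
  ultimately show ?thesis by (intro mult_nonneg_nonneg)
qed

lemma integral_L: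
  assumes X: "X \<in> sets borel"
    and sfT: "sigma_finite_measure M\<Theta>"
    and pm: "case_prod pmt \<in> borel_measurable (restrict_space lborel X \<Otimes>\<^sub>M M\<Theta>)"
    and one: "(\<integral>\<^sup>+ (m, \<theta>). ennreal (pmt m \<theta>) \<partial>(restrict_space lborel X \<Otimes>\<^sub>M M\<Theta>)) = 1"
    and nn: "\<And>m \<theta>. 0 \<le> pmt m \<theta>" and a: "0 < \<alpha>" and b: "0 < \<beta>"
    and pxy1: "\<And>m \<theta>. m \<in> X \<Longrightarrow> \<theta> \<in> space M\<Theta> \<Longrightarrow>
           (\<integral>\<^sup>+ xy. ennreal (pxy xy m \<theta>) \<partial>(restrict_space lborel X \<Otimes>\<^sub>M MY)) = 1"
  shows "(\<integral>z. pmf (NC_given_latent L (\<lambda>l. fst (snd (z l)))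
                     (\<lambda>l. enn2real (\<integral>\<^sup>+ xy. ennreal (pxy xy (fst (z l)) (snd (snd (z l))))
                                         \<partial>(restrict_space lborel X \<Otimes>\<^sub>M MY))))
                  (N, C)
           \<partial>(PiM {..<L} (\<lambda>_. latent_measure X M\<Theta> \<alpha> \<beta> pmt)))
       = (1 / fact N) * real (card (XC L N C)) *
         (((\<beta> / (1 + \<beta>)) powr \<alpha>) ^ L * (1 / (1 + \<beta>)) ^ N * (\<Prod>B\<in>C. Gamma (real (card B) + \<alpha>) / Gamma \<alpha>))"
    (is "integral\<^sup>L ?P ?f = _")
proof -
  let ?Lat = "latent_measure X M\<Theta> \<alpha> \<beta> pmt"
  define T where "T = ((\<beta> / (1 + \<beta>)) powr \<alpha>) ^ L * (1 / (1 + \<beta>)) ^ N * (\<Prod>B\<in>C. Gamma (real (card B) + \<alpha>) / Gamma \<alpha>)"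
  define F where "F z = (1 / fact N) * (\<Sum>ys\<in>XC L N C. \<Prod>l<L. Ef (count (mset ys) l) (fst (snd (z l))))"
    for z :: "nat \<Rightarrow> 'a \<times> real \<times> 'b"
  interpret Lat: prob_space ?Lat by (rule latent_prob[OF X sfT pm one nn a b])
  interpret PS: product_sigma_finite "\<lambda>_. ?Lat"
    unfolding product_sigma_finite_def by (auto intro: Lat.sigma_finite_measure_axioms)
  have wm: "(\<lambda>x. fst (snd x)) \<in> borel_measurable ?Lat"
    unfolding latent_measure_def measurable_density_eq1 by measurable
  have wlm[measurable]: "(\<lambda>z. fst (snd (z l))) \<in> borel_measurable ?P" if "l \<in> {..<L}" for l
    using measurable_compose[OF measurable_component_singleton[OF that] wm] .
  have Fm[measurable]: "F \<in> borel_measurable ?P" unfolding F_def by measurable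
  have F0: "0 \<le> F z" for z unfolding F_def
    by (intro mult_nonneg_nonneg sum_nonneg prod_nonneg Ef_nonneg) auto
  have eqF: "?f z = F z" if z: "z \<in> space ?P" for z
  proof -
    have zl: "z l \<in> X \<times> UNIV \<times> space M\<Theta>" if "l < L" for l
      using z that by (auto simp: space_PiM space_latent)
    define w where "w l = fst (snd (z l))" for l
    define I where "I l = enn2real (\<integral>\<^sup>+ xy. ennreal (pxy xy (fst (z l)) (snd (snd (z l)))) \<partial>(restrict_space lborel X \<Otimes>\<^sub>M MY))" for l
    have I1: "I l = 1" if "l < L" for l using zl[OF that] pxy1 by (auto simp: I_def)
    have "?f z = pmf (NC_given_latent L w I) (N, C)" by (simp only: w_def[abs_def] I_def[abs_def])
    also have "\<dots> = (\<Sum>ys\<in>XC L N C. pmf (DL L (\<lambda>l. po_pmf (w l * I l))) ys)"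
      unfolding NC_eq_DL by (rule pmf_NC_DL)
    also have "\<dots> = (\<Sum>ys\<in>XC L N C. (1 / fact N) * (\<Prod>l<L. Ef (count (mset ys) l) (w l)))"
    proof (rule sum.cong[OF refl])
      fix ys assume ys: "ys \<in> XC L N C"
      hence s: "set ys \<subseteq> {..<L}" and len: "length ys = N" by (auto simp: XC_def)
      have "pmf (DL L (\<lambda>l. po_pmf (w l * I l))) ys
          = (\<Prod>l<L. pmf (po_pmf (w l * I l)) (count (mset ys) l) * fact (count (mset ys) l)) / fact N"
        using pmf_DL'[OF s] len by simp
      also have "(\<Prod>l<L. pmf (po_pmf (w l * I l)) (count (mset ys) l) * fact (count (mset ys) l))
          = (\<Prod>l<L. Ef (count (mset ys) l) (w l))"
        by (rule prod.cong[OF refl]) (simp add: I1 pmf_po_fact Ef_def)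
      finally show "pmf (DL L (\<lambda>l. po_pmf (w l * I l))) ys = (1 / fact N) * (\<Prod>l<L. Ef (count (mset ys) l) (w l))"
        by simp
    qed
    also have "\<dots> = F z" by (simp add: F_def w_def sum_distrib_left)
    finally show ?thesis .
  qed
  have "integral\<^sup>L ?P ?f = integral\<^sup>L ?P F"
    by (rule Bochner_Integration.integral_cong[OF refl eqF])
  also have "\<dots> = enn2real (\<integral>\<^sup>+ z. ennreal (F z) \<partial>?P)"
    by (rule integral_eq_nn_integral) (auto simp: F0)
  also have "(\<integral>\<^sup>+ z. ennreal (F z) \<partial>?P)
      = (\<integral>\<^sup>+ z. ennreal (1 / fact N) * (\<Sum>ys\<in>XC L N C. \<Prod>l<L. ennreal (Ef (count (mset ys) l) (fst (snd (z l))))) \<partial>?P)"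
  proof (intro nn_integral_cong)
    fix z :: "nat \<Rightarrow> 'a \<times> real \<times> 'b"
    let ?S = "\<Sum>ys\<in>XC L N C. \<Prod>l<L. Ef (count (mset ys) l) (fst (snd (z l)))"
    have S0: "0 \<le> ?S" by (intro sum_nonneg prod_nonneg Ef_nonneg)
    have "ennreal (F z) = ennreal (1 / fact N) * ennreal ?S"
      unfolding F_def using S0 by (intro ennreal_mult) auto
    also have "ennreal ?S = (\<Sum>ys\<in>XC L N C. ennreal (\<Prod>l<L. Ef (count (mset ys) l) (fst (snd (z l)))))"
      by (rule sum_ennreal[symmetric]) (intro prod_nonneg Ef_nonneg)
    also have "\<dots> = (\<Sum>ys\<in>XC L N C. \<Prod>l<L. ennreal (Ef (count (mset ys) l) (fst (snd (z l)))))"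
      by (intro sum.cong refl prod_ennreal[symmetric] Ef_nonneg)
    finally show "ennreal (F z) = ennreal (1 / fact N) * (\<Sum>ys\<in>XC L N C. \<Prod>l<L. ennreal (Ef (count (mset ys) l) (fst (snd (z l)))))" .
  qed
  also have "\<dots> = ennreal (1 / fact N) * (\<Sum>ys\<in>XC L N C. \<integral>\<^sup>+ z. (\<Prod>l<L. ennreal (Ef (count (mset ys) l) (fst (snd (z l))))) \<partial>?P)"
  proof -
    have pm: "(\<lambda>z. \<Prod>l<L. ennreal (Ef (count (mset ys) l) (fst (snd (z l))))) \<in> borel_measurable ?P" for ys
    proof (rule borel_measurable_prod_ennreal)
      fix l assume "l \<in> {..<L}"
      from measurable_compose[OF wlm[OF this], of "\<lambda>w. ennreal (Ef (count (mset ys) l) w)"]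
      show "(\<lambda>z. ennreal (Ef (count (mset ys) l) (fst (snd (z l))))) \<in> borel_measurable ?P" by simp
    qed
    have "(\<integral>\<^sup>+ z. ennreal (1 / fact N) * (\<Sum>ys\<in>XC L N C. \<Prod>l<L. ennreal (Ef (count (mset ys) l) (fst (snd (z l))))) \<partial>?P)
        = ennreal (1 / fact N) * (\<integral>\<^sup>+ z. (\<Sum>ys\<in>XC L N C. \<Prod>l<L. ennreal (Ef (count (mset ys) l) (fst (snd (z l))))) \<partial>?P)"
      by (rule nn_integral_cmult) (rule borel_measurable_sum, rule pm)
    also have "(\<integral>\<^sup>+ z. (\<Sum>ys\<in>XC L N C. \<Prod>l<L. ennreal (Ef (count (mset ys) l) (fst (snd (z l))))) \<partial>?P)
        = (\<Sum>ys\<in>XC L N C. \<integral>\<^sup>+ z. (\<Prod>l<L. ennreal (Ef (count (mset ys) l) (fst (snd (z l))))) \<partial>?P)"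
      by (rule nn_integral_sum) (rule pm)
    finally show ?thesis .
  qed
  also have "\<dots> = ennreal (1 / fact N) * (\<Sum>ys\<in>XC L N C. \<Prod>l<L. ennreal (Gc \<alpha> \<beta> (count (mset ys) l)))"
  proof -
    have "(\<integral>\<^sup>+ z. (\<Prod>l<L. ennreal (Ef (count (mset ys) l) (fst (snd (z l))))) \<partial>?P)
        = (\<Prod>l<L. ennreal (Gc \<alpha> \<beta> (count (mset ys) l)))" for ys
    proof -
      have "(\<integral>\<^sup>+ z. (\<Prod>l<L. ennreal (Ef (count (mset ys) l) (fst (snd (z l))))) \<partial>?P)
          = (\<Prod>l<L. \<integral>\<^sup>+ x. ennreal (Ef (count (mset ys) l) (fst (snd x))) \<partial>?Lat)"
        by (rule PS.product_nn_integral_prod[of "{..<L}" "\<lambda>l x. ennreal (Ef (count (mset ys) l) (fst (snd x)))"])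
           (use wm in measurable)
      also have "\<dots> = (\<Prod>l<L. ennreal (Gc \<alpha> \<beta> (count (mset ys) l)))"
      proof (rule prod.cong[OF refl])
        fix l
        have "(\<integral>\<^sup>+ x. ennreal (Ef (count (mset ys) l) (fst (snd x))) \<partial>?Lat)
            = (\<integral>\<^sup>+ w. ennreal (gamma_dens \<alpha> \<beta> w) * ennreal (Ef (count (mset ys) l) w) \<partial>lborel)"
          by (rule latent_marginal[OF X sfT pm one _ nn a]) measurable
        also have "\<dots> = ennreal (Gc \<alpha> \<beta> (count (mset ys) l))" by (rule GE[OF a b])
        finally show "(\<integral>\<^sup>+ x. ennreal (Ef (count (mset ys) l) (fst (snd x))) \<partial>?Lat) = ennreal (Gc \<alpha> \<beta> (count (mset ys) l))" .
      qed
      finally show ?thesis .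
    qed
    thus ?thesis by simp
  qed
  also have "\<dots> = ennreal (1 / fact N) * (\<Sum>ys\<in>XC L N C. ennreal T)"
  proof -
    have "(\<Prod>l<L. ennreal (Gc \<alpha> \<beta> (count (mset ys) l))) = ennreal T" if "ys \<in> XC L N C" for ys
    proof -
      have "(\<Prod>l<L. ennreal (Gc \<alpha> \<beta> (count (mset ys) l))) = ennreal (\<Prod>l<L. Gc \<alpha> \<beta> (count (mset ys) l))"
        by (intro prod_ennreal Gc_nonneg a b)
      also have "\<dots> = ennreal T" unfolding T_def using prod_Gc[OF that a] by simp
      finally show ?thesis .
    qed
    thus ?thesis by simp
  qed
  also have "\<dots> = ennreal ((1 / fact N) * real (card (XC L N C)) * T)"
  proof -
    have T0: "0 \<le> T" unfolding T_def using a b by (rule T_nonneg)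
    have e1: "ennreal (1 / fact N * real (card (XC L N C)) * T) = ennreal (1 / fact N * real (card (XC L N C))) * ennreal T"
      by (rule ennreal_mult) (use T0 in auto)
    have e2: "ennreal (1 / fact N * real (card (XC L N C))) = ennreal (1 / fact N) * ennreal (real (card (XC L N C)))"
      by (rule ennreal_mult) auto
    have e3: "(\<Sum>ys\<in>XC L N C. ennreal T) = ennreal (real (card (XC L N C))) * ennreal T"
      by (simp add: ennreal_of_nat_eq_real_of_nat)
    show ?thesis unfolding e1 e2 e3 by (simp only: mult.assoc)
  qed
  finally have fin: "integral\<^sup>L ?P ?f = enn2real (ennreal ((1 / fact N) * real (card (XC L N C)) * T))" .
  have T0: "0 \<le> T" unfolding T_def using a b by (rule T_nonneg)
  hence "0 \<le> (1 / fact N) * real (card (XC L N C)) * T" by simp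
  with fin show ?thesis unfolding T_def[symmetric] by simp
qed

lemma ffact_nat: "K \<le> L \<Longrightarrow> fact (L - K) * (\<Prod>i<K. L - i) = (fact L :: nat)"
proof (induction K)
  case 0 thus ?case by simp
next
  case (Suc K)
  have h: "L - K = Suc (L - Suc K)" using Suc.prems by simp
  have "fact (L - K) = (fact (Suc (L - Suc K)) :: nat)" using h by simp
  also have "\<dots> = Suc (L - Suc K) * fact (L - Suc K)" by simp
  also have "Suc (L - Suc K) = L - K" using h by simp
  finally have f: "fact (L - K) = (L - K) * (fact (L - Suc K) :: nat)" .
  have "fact (L - Suc K) * (\<Prod>i<Suc K. L - i) = fact (L - Suc K) * ((\<Prod>i<K. L - i) * (L - K))"
    by (simp only: prod.lessThan_Suc)
  also have "\<dots> = fact (L - K) * (\<Prod>i<K. L - i)" unfolding f by (simp only: mult_ac)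
  also have "\<dots> = fact L" using Suc by simp
  finally show ?case .
qed

lemma ffact_eq:
  "real (\<Prod>i<K. L - i) = (if K \<le> L then fact L / fact (L - K) else 0)"
proof (cases "K \<le> L")
  case True
  have "real (fact (L - K) * (\<Prod>i<K. L - i)) = real (fact L)" using ffact_nat[OF True] by (rule arg_cong)
  hence e: "fact (L - K) * real (\<Prod>i<K. L - i) = fact L" by (simp only: of_nat_mult of_nat_fact)
  have nz: "(fact (L - K) :: real) \<noteq> 0" by simp
  have "real (\<Prod>i<K. L - i) = fact L / fact (L - K)"
    using e nz by (simp add: eq_divide_eq mult.commute)
  thus ?thesis using True by simp
next
  case False
  hence "L \<in> {..<K}" by simp
  hence "(\<Prod>i<K. L - i) = 0" by (intro prod_zero) auto
  thus ?thesis using False by simp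
qed

lemma summable_f:
  assumes Lb: "0 < Lbar" and x: "0 \<le> x" "x \<le> 1" and a: "0 \<le> \<alpha>"
  shows "summable (\<lambda>L. if K \<le> L then Po L Lbar * (fact L / fact (L - K)) * x powr (real L * \<alpha>) else 0)"
proof -
  define g where "g L = (if K \<le> L then exp (- Lbar) * Lbar ^ L / fact (L - K) else 0)" for L
  have "summable (\<lambda>L. (exp (- Lbar) * Lbar ^ K) * (inverse (fact L) * Lbar ^ L))"
    by (intro summable_mult summable_exp)
  moreover have "g (L + K) = (exp (- Lbar) * Lbar ^ K) * (inverse (fact L) * Lbar ^ L)" for L
    by (simp add: g_def power_add field_simps)
  ultimately have "summable (\<lambda>L. g (L + K))" by simp
  hence sg: "summable g" by (rule summable_iff_shift[THEN iffD1])
  show ?thesis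
  proof (rule summable_comparison_test'[OF sg])
    fix L :: nat assume "L \<ge> 0"
    show "norm (if K \<le> L then Po L Lbar * (fact L / fact (L - K)) * x powr (real L * \<alpha>) else 0) \<le> g L"
    proof (cases "K \<le> L")
      case True
      have p1: "x powr (real L * \<alpha>) \<le> 1" using x a by (intro powr_le1) auto
      have p0: "0 \<le> x powr (real L * \<alpha>)" by simp
      have e: "Po L Lbar * (fact L / fact (L - K)) = exp (- Lbar) * Lbar ^ L / fact (L - K)"
        by (simp add: Po_def)
      have nn: "0 \<le> exp (- Lbar) * Lbar ^ L / fact (L - K)" using Lb by simp
      have nn2: "0 \<le> exp (- Lbar) * Lbar ^ L / fact (L - K) * x powr (real L * \<alpha>)"
        using nn p0 by (rule mult_nonneg_nonneg)
      have "norm (Po L Lbar * (fact L / fact (L - K)) * x powr (real L * \<alpha>)) = exp (- Lbar) * Lbar ^ L / fact (L - K) * x powr (real L * \<alpha>)"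
        unfolding e real_norm_def by (rule abs_of_nonneg[OF nn2])
      also have "\<dots> \<le> exp (- Lbar) * Lbar ^ L / fact (L - K)"
        using mult_left_mono[OF p1 nn] by simp
      finally show ?thesis using True by (simp add: g_def)
    qed (simp add: g_def)
  qed
qed

lemma pow_powr: "0 < r \<Longrightarrow> (r powr \<alpha>) ^ L = r powr (real L * \<alpha>)"
  by (simp add: powr_realpow[symmetric] powr_powr mult.commute)

theorem theorem1:
  fixes X :: "'a::euclidean_space set"
    and MY :: "'y measure" and M\<Theta> :: "'t measure"
    and Lbar \<alpha> \<beta> :: real
    and pmt :: "'a \<Rightarrow> 't \<Rightarrow> real"
    and pxy :: "'a \<times> 'y \<Rightarrow> 'a \<Rightarrow> 't \<Rightarrow> real"
    and N :: nat and C :: "nat set set"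
  assumes "compact X"
    and "0 < Lbar" and "0 < \<alpha>" and "0 < \<beta>"
    and "sigma_finite_measure MY" and "sigma_finite_measure M\<Theta>"
    and "case_prod pmt \<in> borel_measurable (restrict_space lborel X \<Otimes>\<^sub>M M\<Theta>)"
    and "\<And>m \<theta>. 0 \<le> pmt m \<theta>"
    and "(\<integral>\<^sup>+ (m, \<theta>). ennreal (pmt m \<theta>) \<partial>(restrict_space lborel X \<Otimes>\<^sub>M M\<Theta>)) = 1"
    and "(\<lambda>(xy, m, \<theta>). pxy xy m \<theta>)
           \<in> borel_measurable ((restrict_space lborel X \<Otimes>\<^sub>M MY) \<Otimes>\<^sub>M (restrict_space lborel X \<Otimes>\<^sub>M M\<Theta>))"
    and "\<And>xy m \<theta>. 0 \<le> pxy xy m \<theta>"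
    and "\<And>m \<theta>. m \<in> X \<Longrightarrow> \<theta> \<in> space M\<Theta> \<Longrightarrow>
           (\<integral>\<^sup>+ xy. ennreal (pxy xy m \<theta>) \<partial>(restrict_space lborel X \<Otimes>\<^sub>M MY)) = 1"
    and "partition_on {1..N} C"
  shows "NS_prob X MY M\<Theta> Lbar \<alpha> \<beta> pmt pxy N C =
    (1 / fact N) * (1 / (1 + \<beta>)) ^ N *
      (\<Sum>L. if card C \<le> L
            then Po L Lbar * (fact L / fact (L - card C)) * (\<beta> / (1 + \<beta>)) powr (real L * \<alpha>)
            else 0)
    * (\<Prod>B\<in>C. Gamma (real (card B) + \<alpha>) / Gamma \<alpha>)"
proof -
  note as = assms
  have X: "X \<in> sets borel" using as(1) by (intro borel_closed compact_imp_closed)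
  define c where "c = (1 / fact N) * (1 / (1 + \<beta>)) ^ N"
  define P where "P = (\<Prod>B\<in>C. Gamma (real (card B) + \<alpha>) / Gamma \<alpha>)"
  define f where "f L = (if card C \<le> L
            then Po L Lbar * (fact L / fact (L - card C)) * (\<beta> / (1 + \<beta>)) powr (real L * \<alpha>)
            else 0)" for L
  have r: "0 < \<beta> / (1 + \<beta>)" "\<beta> / (1 + \<beta>) \<le> 1" using as(4) by auto
  have sf: "summable f" unfolding f_def
    using summable_f[OF as(2) less_imp_le[OF r(1)] r(2) less_imp_le[OF as(3)]] .
  have trm: "Po L Lbar *
        (\<integral>z. pmf (NC_given_latent L (\<lambda>l. fst (snd (z l)))
                     (\<lambda>l. enn2real (\<integral>\<^sup>+ xy. ennreal (pxy xy (fst (z l)) (snd (snd (z l))))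
                                         \<partial>(restrict_space lborel X \<Otimes>\<^sub>M MY))))
                  (N, C)
           \<partial>(PiM {..<L} (\<lambda>_. latent_measure X M\<Theta> \<alpha> \<beta> pmt))) = c * f L * P" for L
  proof -
    have "Po L Lbar * (1 / fact N) * real (card (XC L N C)) * (((\<beta> / (1 + \<beta>)) powr \<alpha>) ^ L * (1 / (1 + \<beta>)) ^ N * P)
        = c * f L * P"
      unfolding card_XC[OF as(13)] ffact_eq c_def f_def pow_powr[OF r(1)]
      by (simp add: mult_ac)
    moreover have "(\<integral>z. pmf (NC_given_latent L (\<lambda>l. fst (snd (z l)))
                     (\<lambda>l. enn2real (\<integral>\<^sup>+ xy. ennreal (pxy xy (fst (z l)) (snd (snd (z l))))
                                         \<partial>(restrict_space lborel X \<Otimes>\<^sub>M MY))))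
                  (N, C)
           \<partial>(PiM {..<L} (\<lambda>_. latent_measure X M\<Theta> \<alpha> \<beta> pmt))) = (1 / fact N) * real (card (XC L N C)) *
         (((\<beta> / (1 + \<beta>)) powr \<alpha>) ^ L * (1 / (1 + \<beta>)) ^ N * P)"
      unfolding P_def by (rule integral_L[OF X as(6) as(7) as(9) as(8) as(3) as(4) as(12)])
    ultimately show ?thesis by (simp add: mult_ac)
  qed
  have "NS_prob X MY M\<Theta> Lbar \<alpha> \<beta> pmt pxy N C = (\<Sum>L. c * f L * P)"
    unfolding NS_prob_def trm ..
  also have "\<dots> = (\<Sum>L. c * f L) * P" by (rule suminf_mult2[symmetric]) (intro summable_mult sf)
  also have "(\<Sum>L. c * f L) = c * (\<Sum>L. f L)" by (rule suminf_mult) (rule sf)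
  finally show ?thesis by (simp add: c_def f_def P_def)
qed

end
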